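(* Let $\epsilon>0$ and let $u,\theta,\psi:(-\epsilon,\epsilon)\to\mathbb R$ be differentiable functions such that $a_ju(t)+1>0$ for $j=1,\ldots,m$ and all $t\in(-\epsilon,\epsilon)$, and which satisfy \[\frac{du}{dt}=2Q(u)^{1/2}\cos\theta,\] \[\frac{d\theta}{dt}=-Q(u)^{1/2}\sin\theta\sum_{j=1}^m\frac{a_j}{a_ju+1},\] \[\frac{d\psi}{dt}=-Q(u)^{1/2}\sin\theta\sum_{j=1}^m\frac{a_j^2}{a_ju+1}.\] Define $N\subset\mathbb C^m$ to be the set of points \[\bigl(re^{i\alpha_1}\sqrt{a_1u(t)+1},\ldots,re^{i\alpha_m}\sqrt{a_mu(t)+1}\bigr)\] with $r>0$, $t\in(-\epsilon,\epsilon)$, $\alpha_j\in\mathbb R$, $\alpha_1+\cdots+\alpha_m=\theta(t)$ and $a_1\alpha_1+\cdots+a_m\alpha_m=\psi(t)$. Then $N$ is a special Lagrangian submanifold of $\mathbb C^m$ with phase $i^{m-2}$.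
   Context: Standing assumptions: $m\ge3$, and $a_1\le\cdots\le a_m$ are integers, not all zero, with highest common factor $1$ and $a_1+\cdots+a_m=0$. $Q(u)=\prod_{j=1}^m(a_ju+1)$. $\mathbb C^m$ carries the metric $g=\sum_j|dz_j|^2$, the Kähler form $\omega=\frac i2\sum_j dz_j\wedge d\bar z_j$ and $\Omega=dz_1\wedge\cdots\wedge dz_m$. An oriented real $m$-dimensional submanifold $L$ is special Lagrangian with phase $e^{i\theta}$ if $(\cos\theta\,\mathrm{Re}\,\Omega+\sin\theta\,\mathrm{Im}\,\Omega)|_L$ equals the induced volume form. *)

theory Defs
  imports "HOL-Analysis.Analysis"
begin

text \<open>The polynomial Q(u) = prod_j (a_j u + 1).\<close>
definition Qpoly :: "('m::finite \<Rightarrow> int) \<Rightarrow> real \<Rightarrow> real" where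
  "Qpoly a u = (\<Prod>j\<in>UNIV. of_int (a j) * u + 1)"

text \<open>C^k maps on an open set (k-fold Frechet differentiable with continuous k-th derivative),
  and smooth (C-infinity) maps.\<close>
fun Ck_on :: "nat \<Rightarrow> 'a::real_normed_vector set \<Rightarrow> ('a \<Rightarrow> 'b::real_normed_vector) \<Rightarrow> bool" where
  "Ck_on 0 U f = continuous_on U f"
| "Ck_on (Suc k) U f =
     (\<exists>f'. (\<forall>x\<in>U. (f has_derivative f' x) (at x)) \<and> (\<forall>v. Ck_on k U (\<lambda>x. f' x v)))"

definition smooth_on :: "'a::real_normed_vector set \<Rightarrow> ('a \<Rightarrow> 'b::real_normed_vector) \<Rightarrow> bool" where
  "smooth_on U f \<longleftrightarrow> (\<forall>k. Ck_on k U f)"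

text \<open>Holomorphic volume form Omega = dz_1 ^ ... ^ dz_m evaluated on the tangent vectors
  D(e_1),...,D(e_m) of a linear map D : R^m -> C^m.\<close>
definition Omega_on :: "((real^'m::finite) \<Rightarrow> complex^'m) \<Rightarrow> complex" where
  "Omega_on D = det (\<chi> j k. D (axis k 1) $ j)"

text \<open>Induced (Riemannian) volume form of g on the same tangent vectors: sqrt of the Gram determinant.\<close>
definition vol_on :: "((real^'m::finite) \<Rightarrow> complex^'m) \<Rightarrow> real" where
  "vol_on D = sqrt (det (\<chi> j k. D (axis j 1) \<bullet> D (axis k 1) :: real^'m^'m))"

text \<open>N is an (immersed) special Lagrangian m-fold with phase ph: N is the image of a smooth
  immersion of a second countable oriented m-manifold whose orientation makes
  (cos th Re Omega + sin th Im Omega) = Re (cnj ph * Omega) equal to the induced volume form.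
  Equivalently (covering the manifold by countably many oriented charts), N is the union of
  countably many such oriented parametrised patches.\<close>
definition special_lagrangian :: "complex \<Rightarrow> (complex^'m::finite) set \<Rightarrow> bool" where
  "special_lagrangian ph N \<longleftrightarrow>
     (\<exists>(U :: nat \<Rightarrow> (real^'m) set) (\<phi> :: nat \<Rightarrow> real^'m \<Rightarrow> complex^'m) (I :: nat set).
        N = (\<Union>i\<in>I. \<phi> i ` U i) \<and>
        (\<forall>i\<in>I. open (U i) \<and> smooth_on (U i) (\<phi> i) \<and>
           (\<forall>x\<in>U i. (\<phi> i) differentiable (at x) \<and>
               inj (frechet_derivative (\<phi> i) (at x)) \<and>
               Re (cnj ph * Omega_on (frechet_derivative (\<phi> i) (at x)))
                 = vol_on (frechet_derivative (\<phi> i) (at x)))))"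

end

theory Submission
  imports Defs
begin

(* ---- CkA ---- *)
lemma CkI: "(\<And>x. x \<in> U \<Longrightarrow> (f has_derivative f' x) (at x)) \<Longrightarrow> (\<And>v. Ck_on k U (\<lambda>x. f' x v)) \<Longrightarrow> Ck_on (Suc k) U f"
  by auto

lemma Ck_SucD: "Ck_on (Suc k) U f \<Longrightarrow> Ck_on k U f"
proof (induction k arbitrary: f)
  case 0
  then obtain f' where "\<forall>x\<in>U. (f has_derivative f' x) (at x)" by auto
  then show ?case
    by (auto intro!: continuous_at_imp_continuous_on has_derivative_continuous)
next
  case (Suc k)
  then obtain f' where "\<forall>x\<in>U. (f has_derivative f' x) (at x)" "\<forall>v. Ck_on (Suc k) U (\<lambda>x. f' x v)"
    by auto
  then show ?case
    by (intro CkI[of U f f']) (auto intro: Suc.IH)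
qed

lemma Ck_le: "Ck_on k U f \<Longrightarrow> j \<le> k \<Longrightarrow> Ck_on j U f"
proof (induction k)
  case 0 then show ?case by simp
next
  case (Suc k) then show ?case using Ck_SucD le_Suc_eq by blast
qed

lemma Ck_linear:
  assumes L: "bounded_linear L"
  shows "Ck_on k U f \<Longrightarrow> Ck_on k U (\<lambda>x. L (f x))"
proof (induction k arbitrary: f)
  case 0 then show ?case using bounded_linear.continuous_on[OF L] by simp
next
  case (Suc k)
  then obtain f' where "\<forall>x\<in>U. (f has_derivative f' x) (at x)" "\<forall>v. Ck_on k U (\<lambda>x. f' x v)"
    by auto
  show ?case
    apply (rule CkI[of U _ "\<lambda>x v. L (f' x v)"])
    subgoal for x using bounded_linear.has_derivative[OF L, of f "f' x" "at x"] \<open>\<forall>x\<in>U. _\<close> by blast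
    using Suc.IH \<open>\<forall>v. _\<close> by blast
qed

lemma Ck_const: "Ck_on k U (\<lambda>x. c)"
proof (induction k arbitrary: c)
  case 0 then show ?case by simp
next
  case (Suc k) then show ?case by (auto intro!: exI[of _ "\<lambda>x v. 0"])
qed

lemma Ck_add: "Ck_on k U f \<Longrightarrow> Ck_on k U g \<Longrightarrow> Ck_on k U (\<lambda>x. f x + g x)"
proof (induction k arbitrary: f g)
  case 0 then show ?case by (simp add: continuous_on_add)
next
  case (Suc k)
  from Suc.prems obtain f' where f: "\<forall>x\<in>U. (f has_derivative f' x) (at x)" "\<forall>v. Ck_on k U (\<lambda>x. f' x v)"
    by auto
  from Suc.prems obtain g' where g: "\<forall>x\<in>U. (g has_derivative g' x) (at x)" "\<forall>v. Ck_on k U (\<lambda>x. g' x v)"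
    by auto
  show ?case using f g Suc.IH
    by (auto intro!: exI[of _ "\<lambda>x v. f' x v + g' x v"] has_derivative_add)
qed

lemma Ck_bilinear:
  assumes B: "bounded_bilinear pr"
  shows "Ck_on k U f \<Longrightarrow> Ck_on k U g \<Longrightarrow> Ck_on k U (\<lambda>x. pr (f x) (g x))"
proof (induction k arbitrary: f g)
  case 0 then show ?case using bounded_bilinear.continuous_on[OF B] by simp
next
  case (Suc k)
  from Suc.prems obtain f' where f: "\<forall>x\<in>U. (f has_derivative f' x) (at x)" "\<forall>v. Ck_on k U (\<lambda>x. f' x v)"
    by auto
  from Suc.prems obtain g' where g: "\<forall>x\<in>U. (g has_derivative g' x) (at x)" "\<forall>v. Ck_on k U (\<lambda>x. g' x v)"
    by auto
  have fk: "Ck_on k U f" "Ck_on k U g" using Suc.prems Ck_SucD by blast+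
  show ?case
    apply (rule CkI[of U _ "\<lambda>x v. pr (f x) (g' x v) + pr (f' x v) (g x)"])
    subgoal for x by (rule bounded_bilinear.FDERIV[OF B]) (use f g in auto)
    subgoal for v by (rule Ck_add; rule Suc.IH) (use f g fk in auto)
    done
qed

(* ---- CkB ---- *)
lemmas Ck_mult = Ck_bilinear[OF bounded_bilinear_mult]
lemmas Ck_scaleR = Ck_bilinear[OF bounded_bilinear_scaleR]

lemma Ck_sum: "finite S \<Longrightarrow> (\<And>i. i \<in> S \<Longrightarrow> Ck_on k U (f i)) \<Longrightarrow> Ck_on k U (\<lambda>x. \<Sum>i\<in>S. f i x)"
proof (induction S rule: finite_induct)
  case empty then show ?case by (simp only: sum.empty Ck_const)
next
  case (insert i S)
  then show ?case by (simp only: sum.insert[OF insert(1,2)]) (rule Ck_add, auto)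
qed

lemma Ck_prod: "finite S \<Longrightarrow> (\<And>i. i \<in> S \<Longrightarrow> Ck_on k U (f i)) \<Longrightarrow>
   Ck_on k U (\<lambda>x. \<Prod>i\<in>S. (f i x :: 'a::real_normed_field))"
proof (induction S rule: finite_induct)
  case empty then show ?case by (simp only: prod.empty Ck_const)
next
  case (insert i S)
  then show ?case by (simp only: prod.insert[OF insert(1,2)]) (rule Ck_mult, auto)
qed

lemma Ck_neg: "Ck_on k U f \<Longrightarrow> Ck_on k U (\<lambda>x. - f x)"
  by (rule Ck_linear[OF bounded_linear_minus[OF bounded_linear_ident]])

lemma Ck_diff: "Ck_on k U f \<Longrightarrow> Ck_on k U g \<Longrightarrow> Ck_on k U (\<lambda>x. f x - g x)"
  unfolding diff_conv_add_uminus by (rule Ck_add, assumption, rule Ck_neg)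

(* ---- CkC ---- *)
lemma linear_expand:
  fixes h :: "'b::euclidean_space \<Rightarrow> 'c::real_normed_vector"
  assumes "linear h"
  shows "h w = (\<Sum>b\<in>Basis. (w \<bullet> b) *\<^sub>R h b)"
proof -
  have "h w = h (\<Sum>b\<in>Basis. (w \<bullet> b) *\<^sub>R b)" by (simp add: euclidean_representation)
  also have "\<dots> = (\<Sum>b\<in>Basis. (w \<bullet> b) *\<^sub>R h b)"
    using assms by (simp add: linear_sum linear_scale)
  finally show ?thesis .
qed

lemma Ck_compose:
  fixes g :: "'b::euclidean_space \<Rightarrow> 'c::real_normed_vector"
  shows "Ck_on k U f \<Longrightarrow> Ck_on k V g \<Longrightarrow> (\<And>x. x \<in> U \<Longrightarrow> f x \<in> V) \<Longrightarrow> Ck_on k U (\<lambda>x. g (f x))"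
proof (induction k arbitrary: f g)
  case 0 then show ?case using continuous_on_compose2[of V g U f] by auto
next
  case (Suc k)
  from Suc.prems obtain f' where f: "\<forall>x\<in>U. (f has_derivative f' x) (at x)" "\<forall>v. Ck_on k U (\<lambda>x. f' x v)"
    by auto
  from Suc.prems obtain g' where g: "\<forall>x\<in>V. (g has_derivative g' x) (at x)" "\<forall>v. Ck_on k V (\<lambda>x. g' x v)"
    by auto
  have fk: "Ck_on k U f" using Suc.prems Ck_SucD by blast
  have eq: "g' (f x) (f' x v) = (\<Sum>b\<in>Basis. (f' x v \<bullet> b) *\<^sub>R g' (f x) b)" if "x \<in> U" for x v
    using linear_expand[OF has_derivative_linear] g(1) Suc.prems(3) that by blast
  have ck: "Ck_on k U (\<lambda>x. \<Sum>b\<in>Basis. (f' x v \<bullet> b) *\<^sub>R g' (f x) b)" for v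
    apply (rule Ck_sum, simp)
    apply (rule Ck_scaleR)
     apply (rule Ck_linear[OF bounded_linear_inner_left]) using f apply simp
    apply (rule Suc.IH[OF fk]) using g Suc.prems(3) by auto
  have d: "((\<lambda>x. g (f x)) has_derivative (\<lambda>v. g' (f x) (f' x v))) (at x)" if "x \<in> U" for x
    using has_derivative_compose[of f "f' x" x UNIV g "g' (f x)"] f(1) g(1) Suc.prems(3) that by blast
  show ?case
    apply (rule CkI[of U _ "\<lambda>x v. \<Sum>b\<in>Basis. (f' x v \<bullet> b) *\<^sub>R g' (f x) b"])
    subgoal for x
      apply (rule has_derivative_eq_rhs[OF d], assumption)
      using eq by blast
    by (rule ck)
qed

(* ---- CkD ---- *)
lemma Ck_deriv:
  fixes g :: "'a::real_normed_field \<Rightarrow> 'a"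
  assumes "\<And>x. x \<in> S \<Longrightarrow> (g has_field_derivative g' x) (at x)"
    and "Ck_on k S g'"
  shows "Ck_on (Suc k) S g"
  apply (rule CkI[of S g "\<lambda>x v. g' x * v"])
  subgoal for x using has_field_derivative_imp_has_derivative[OF assms(1)] by blast
  subgoal for v by (rule Ck_mult[OF assms(2) Ck_const])
  done

lemma Ck_sin_cos: "Ck_on k S (sin :: real \<Rightarrow> real) \<and> Ck_on k S (cos :: real \<Rightarrow> real)"
proof (induction k)
  case 0 then show ?case by (auto intro: continuous_intros)
next
  case (Suc k)
  have "Ck_on (Suc k) S (sin :: real \<Rightarrow> real)"
    by (rule Ck_deriv[of S sin cos]) (use Suc in \<open>auto intro: DERIV_sin\<close>)
  moreover have "Ck_on k S (\<lambda>x. - sin x :: real)"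
    by (rule Ck_neg) (use Suc in auto)
  then have "Ck_on (Suc k) S (cos :: real \<Rightarrow> real)"
    by (intro Ck_deriv[of S cos "\<lambda>x. - sin x"]) (auto intro: DERIV_cos)
  ultimately show ?case by blast
qed

lemma Ck_exp: "Ck_on k S (exp :: 'a::{real_normed_field,banach} \<Rightarrow> 'a)"
proof (induction k)
  case 0 then show ?case by (auto intro: continuous_intros)
next
  case (Suc k)
  show ?case by (rule Ck_deriv[of S exp exp]) (use Suc in \<open>auto intro: DERIV_exp\<close>)
qed

lemma Ck_inverse_base: "Ck_on k {x::real. x \<noteq> 0} inverse"
proof (induction k)
  case 0 then show ?case by (auto intro!: continuous_intros)
next
  case (Suc k)
  have "Ck_on k {x::real. x \<noteq> 0} (\<lambda>x. - (inverse x * inverse x))"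
    by (rule Ck_neg, rule Ck_mult) (use Suc in auto)
  then show ?case
    apply (rule Ck_deriv[rotated])
    by (auto intro!: derivative_eq_intros simp: power2_eq_square)
qed

lemma Ck_sqrt_base: "Ck_on k {0<..} sqrt"
proof (induction k)
  case 0 then show ?case by (auto intro!: continuous_intros)
next
  case (Suc k)
  have "Ck_on k {0<..} (\<lambda>x. inverse (sqrt x) / 2)"
    unfolding divide_inverse
    apply (rule Ck_mult[OF _ Ck_const])
    apply (rule Ck_compose[OF Suc.IH Ck_inverse_base])
    by auto
  then show ?case
    apply (rule Ck_deriv[rotated])
    by (rule DERIV_real_sqrt) auto
qed

lemma Ck_inverse: "Ck_on k U f \<Longrightarrow> (\<And>x. x \<in> U \<Longrightarrow> f x \<noteq> (0::real)) \<Longrightarrow> Ck_on k U (\<lambda>x. inverse (f x))"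
  by (rule Ck_compose[OF _ Ck_inverse_base]) auto

lemma Ck_sqrt: "Ck_on k U f \<Longrightarrow> (\<And>x. x \<in> U \<Longrightarrow> f x > (0::real)) \<Longrightarrow> Ck_on k U (\<lambda>x. sqrt (f x))"
  by (rule Ck_compose[OF _ Ck_sqrt_base]) auto

lemma Ck_sin: "Ck_on k U f \<Longrightarrow> Ck_on k U (\<lambda>x. sin (f x :: real))"
  by (rule Ck_compose[OF _ conjunct1[OF Ck_sin_cos[of k UNIV]]]) auto

lemma Ck_cos: "Ck_on k U f \<Longrightarrow> Ck_on k U (\<lambda>x. cos (f x :: real))"
  by (rule Ck_compose[OF _ conjunct2[OF Ck_sin_cos[of k UNIV]]]) auto

lemma Ck_cexp: "Ck_on k U f \<Longrightarrow> Ck_on k U (\<lambda>x. exp (f x :: complex))"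
  by (rule Ck_compose[OF _ Ck_exp[of k UNIV]]) auto

lemma Ck_divide: "Ck_on k U f \<Longrightarrow> Ck_on k U g \<Longrightarrow> (\<And>x. x \<in> U \<Longrightarrow> g x \<noteq> (0::real)) \<Longrightarrow> Ck_on k U (\<lambda>x. f x / g x)"
  unfolding divide_inverse by (rule Ck_mult, assumption, rule Ck_inverse)

lemma smooth_onI: "(\<And>k. Ck_on k U f) \<Longrightarrow> smooth_on U f"
  by (simp add: smooth_on_def)

(* ---- CkE ---- *)
lemma Ck_id: "Ck_on k U (\<lambda>x. x)"
proof (induction k)
  case 0 then show ?case by (simp add: continuous_on_id)
next
  case (Suc k) show ?case by (rule CkI[of U _ "\<lambda>x v. v"]) (auto intro: Ck_const)
qed

lemma Ck_pair: "Ck_on k U f \<Longrightarrow> Ck_on k U g \<Longrightarrow> Ck_on k U (\<lambda>x. (f x, g x))"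
proof (induction k arbitrary: f g)
  case 0 then show ?case by (auto intro: continuous_on_Pair)
next
  case (Suc k)
  from Suc.prems obtain f' where f: "\<forall>x\<in>U. (f has_derivative f' x) (at x)" "\<forall>v. Ck_on k U (\<lambda>x. f' x v)"
    by auto
  from Suc.prems obtain g' where g: "\<forall>x\<in>U. (g has_derivative g' x) (at x)" "\<forall>v. Ck_on k U (\<lambda>x. g' x v)"
    by auto
  show ?case
    apply (rule CkI[of U _ "\<lambda>x v. (f' x v, g' x v)"])
    subgoal for x by (rule has_derivative_Pair) (use f g in auto)
    subgoal for v by (rule Suc.IH) (use f g in auto)
    done
qed

lemma Ck_fst: "Ck_on k U (\<lambda>y. fst y)"
  by (rule Ck_linear[OF bounded_linear_fst Ck_id])

lemma Ck_snd: "Ck_on k U (\<lambda>y. snd y)"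
  by (rule Ck_linear[OF bounded_linear_snd Ck_id])

definition odeF :: "('m::finite \<Rightarrow> int) \<Rightarrow> real \<times> real \<Rightarrow> real \<times> real" where
  "odeF a y = (2 * sqrt (Qpoly a (fst y)) * cos (snd y),
     - sqrt (Qpoly a (fst y)) * sin (snd y) * (\<Sum>j\<in>UNIV. of_int (a j) / (of_int (a j) * fst y + 1)))"

definition odeH :: "('m::finite \<Rightarrow> int) \<Rightarrow> real \<times> real \<Rightarrow> real" where
  "odeH a y = - sqrt (Qpoly a (fst y)) * sin (snd y) * (\<Sum>j\<in>UNIV. (of_int (a j))\<^sup>2 / (of_int (a j) * fst y + 1))"

definition odeV :: "('m::finite \<Rightarrow> int) \<Rightarrow> (real \<times> real) set" where
  "odeV a = {y. \<forall>j. of_int (a j) * fst y + 1 > 0}"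

lemma Qpoly_pos: "(\<And>j. of_int (a j) * x + 1 > 0) \<Longrightarrow> Qpoly a x > 0"
  unfolding Qpoly_def by (rule prod_pos) auto

lemma Ck_lin_fst: "Ck_on k U (\<lambda>y. of_int (a j) * fst y + (1::real))"
  by (rule Ck_add[OF Ck_mult[OF Ck_const Ck_fst] Ck_const])

lemma Ck_Q: "Ck_on k U (\<lambda>y. Qpoly a (fst y))"
  unfolding Qpoly_def by (rule Ck_prod) (auto intro: Ck_lin_fst)

lemma Ck_sqrtQ: "Ck_on k (odeV a) (\<lambda>y. sqrt (Qpoly a (fst y)))"
  by (rule Ck_sqrt[OF Ck_Q]) (auto simp: odeV_def intro: Qpoly_pos)

lemma Ck_odeF: "Ck_on k (odeV a) (odeF a)"
  unfolding odeF_def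
  apply (rule Ck_pair)
   apply (rule Ck_mult[OF Ck_mult[OF Ck_const Ck_sqrtQ] Ck_cos[OF Ck_snd]])
  apply (rule Ck_mult[OF Ck_mult[OF Ck_neg[OF Ck_sqrtQ] Ck_sin[OF Ck_snd]]])
  apply (rule Ck_sum, simp)
  apply (rule Ck_divide[OF Ck_const Ck_lin_fst])
  apply (auto simp: odeV_def)
  by (metis less_irrefl)

lemma Ck_odeH: "Ck_on k (odeV a) (odeH a)"
  unfolding odeH_def
  apply (rule Ck_mult[OF Ck_mult[OF Ck_neg[OF Ck_sqrtQ] Ck_sin[OF Ck_snd]]])
  apply (rule Ck_sum, simp)
  apply (rule Ck_divide[OF Ck_const Ck_lin_fst])
  apply (auto simp: odeV_def)
  by (metis less_irrefl)

lemma ode_smooth: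
  fixes a :: "'m::finite \<Rightarrow> int" and u \<theta> \<psi> :: "real \<Rightarrow> real" and I :: "real set"
  assumes pos: "\<And>j t. t \<in> I \<Longrightarrow> of_int (a j) * u t + 1 > 0"
    and du: "\<And>t. t \<in> I \<Longrightarrow>
              (u has_real_derivative (2 * sqrt (Qpoly a (u t)) * cos (\<theta> t))) (at t)"
    and dtheta: "\<And>t. t \<in> I \<Longrightarrow>
              (\<theta> has_real_derivative
                 (- sqrt (Qpoly a (u t)) * sin (\<theta> t) *
                    (\<Sum>j\<in>UNIV. of_int (a j) / (of_int (a j) * u t + 1)))) (at t)"
    and dpsi: "\<And>t. t \<in> I \<Longrightarrow>
              (\<psi> has_real_derivative
                 (- sqrt (Qpoly a (u t)) * sin (\<theta> t) *
                    (\<Sum>j\<in>UNIV. (of_int (a j))\<^sup>2 / (of_int (a j) * u t + 1)))) (at t)"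
  shows "Ck_on k I u" "Ck_on k I \<theta>" "Ck_on k I \<psi>"
proof -
  let ?Y = "\<lambda>t. (u t, \<theta> t)"
  have YV: "?Y t \<in> odeV a" if "t \<in> I" for t using pos that by (auto simp: odeV_def)
  have dY: "(?Y has_derivative (\<lambda>v. v *\<^sub>R odeF a (?Y t))) (at t)" if "t \<in> I" for t
    apply (rule has_derivative_eq_rhs)
     apply (rule has_derivative_Pair)
      apply (rule has_field_derivative_imp_has_derivative[OF du[OF that]])
     apply (rule has_field_derivative_imp_has_derivative[OF dtheta[OF that]])
    by (auto simp: odeF_def fun_eq_iff)
  have CY: "Ck_on k I ?Y" for k
  proof (induction k)
    case 0
    then show ?case using dY
      by (auto intro!: continuous_at_imp_continuous_on has_derivative_continuous)
  next
    case (Suc k)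
    show ?case
      apply (rule CkI[of I _ "\<lambda>t v. v *\<^sub>R odeF a (?Y t)"])
       apply (rule dY, assumption)
      apply (rule Ck_scaleR[OF Ck_const])
      apply (rule Ck_compose[OF Suc.IH Ck_odeF])
      using YV by auto
  qed
  show "Ck_on k I u" using Ck_compose[OF CY Ck_fst[of k UNIV]] by simp
  show "Ck_on k I \<theta>" using Ck_compose[OF CY Ck_snd[of k UNIV]] by simp
  have "Ck_on (Suc k) I \<psi>"
    apply (rule Ck_deriv[of I \<psi> "\<lambda>t. odeH a (?Y t)"])
     subgoal by (unfold odeH_def fst_conv snd_conv, erule dpsi)
    apply (rule Ck_compose[OF CY Ck_odeH])
    using YV by auto
  then show "Ck_on k I \<psi>" by (rule Ck_SucD)
qed

(* ---- LA ---- *)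
lemma sum_split3:
  fixes f :: "'m::finite \<Rightarrow> 'a::comm_monoid_add"
  assumes "p \<noteq> q"
  shows "(\<Sum>j\<in>UNIV. f j) = f p + f q + (\<Sum>j\<in>UNIV - {p,q}. f j)"
proof -
  have "UNIV = insert p (insert q (UNIV - {p,q}))" by auto
  then have "(\<Sum>j\<in>UNIV. f j) = (\<Sum>j\<in>insert p (insert q (UNIV - {p,q})). f j)" by simp
  also have "\<dots> = f p + f q + (\<Sum>j\<in>UNIV - {p,q}. f j)"
    using assms by (simp add: add.assoc)
  finally show ?thesis .
qed

lemma prod_split3:
  fixes f :: "'m::finite \<Rightarrow> 'a::comm_monoid_mult"
  assumes "p \<noteq> q"
  shows "(\<Prod>j\<in>UNIV. f j) = f p * f q * (\<Prod>j\<in>UNIV - {p,q}. f j)"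
proof -
  have "UNIV = insert p (insert q (UNIV - {p,q}))" by auto
  then have "(\<Prod>j\<in>UNIV. f j) = (\<Prod>j\<in>insert p (insert q (UNIV - {p,q})). f j)" by simp
  also have "\<dots> = f p * f q * (\<Prod>j\<in>UNIV - {p,q}. f j)"
    using assms by (simp add: mult.assoc)
  finally show ?thesis .
qed

lemma det_two_block:
  fixes A :: "'a::comm_ring_1^'m::finite^'m"
  assumes pq: "p \<noteq> q"
    and rows: "\<And>j k. j \<notin> {p,q} \<Longrightarrow> A$j$k = (if k = j then d j else 0)"
  shows "det A = (\<Prod>j\<in>UNIV - {p,q}. d j) * (A$p$p * A$q$q - A$p$q * A$q$p)"
proof -
  let ?P = "{\<sigma>. \<sigma> permutes (UNIV :: 'm set)}"
  let ?t = "Transposition.transpose p q"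
  let ?f = "\<lambda>\<sigma>. of_int (sign \<sigma>) * (\<Prod>i\<in>UNIV. A$i$\<sigma> i)"
  have zero: "?f \<sigma> = 0" if "\<sigma> \<in> ?P - {id, ?t}" for \<sigma>
  proof (rule ccontr)
    assume nz: "?f \<sigma> \<noteq> 0"
    have sp: "\<sigma> permutes UNIV" using that by auto
    have fixK: "\<sigma> i = i" if "i \<notin> {p,q}" for i
    proof (rule ccontr)
      assume "\<sigma> i \<noteq> i"
      then have "A$i$\<sigma> i = 0" using rows[OF that] by simp
      then have "(\<Prod>i\<in>UNIV. A$i$\<sigma> i) = 0" by (meson UNIV_I finite prod_zero)
      then show False using nz by simp
    qed
    have inj: "inj \<sigma>" using sp permutes_inj by blast
    have sp_in: "\<sigma> p \<in> {p,q}"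
    proof (rule ccontr)
      assume "\<sigma> p \<notin> {p,q}"
      then have "\<sigma> (\<sigma> p) = \<sigma> p" using fixK by blast
      then have "\<sigma> p = p" using inj by (meson injD)
      then show False using \<open>\<sigma> p \<notin> {p,q}\<close> by simp
    qed
    have sq_in: "\<sigma> q \<in> {p,q}"
    proof (rule ccontr)
      assume "\<sigma> q \<notin> {p,q}"
      then have "\<sigma> (\<sigma> q) = \<sigma> q" using fixK by blast
      then have "\<sigma> q = q" using inj by (meson injD)
      then show False using \<open>\<sigma> q \<notin> {p,q}\<close> by simp
    qed
    have "\<sigma> p \<noteq> \<sigma> q" using inj pq by (meson injD)
    then consider "\<sigma> p = p" "\<sigma> q = q" | "\<sigma> p = q" "\<sigma> q = p" using sp_in sq_in by auto
    then show False
    proof cases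
      case 1
      then have "\<sigma> = id" using fixK by (metis eq_id_iff insertE singletonD)
      then show False using that by simp
    next
      case 2
      then have "\<sigma> = ?t" using fixK by (auto simp: fun_eq_iff Transposition.transpose_def)
      then show False using that by simp
    qed
  qed
  have sub: "{id, ?t} \<subseteq> ?P" by (auto intro: permutes_id permutes_swap_id)
  have "det A = sum ?f ?P" by (simp add: det_def)
  also have "\<dots> = sum ?f {id, ?t}"
    by (rule sum.mono_neutral_right[OF _ sub]) (use zero in auto)
  also have "\<dots> = ?f id + ?f ?t"
  proof -
    have "id \<noteq> ?t" using pq by (metis id_apply transpose_apply_first)
    then show ?thesis by simp
  qed
  also have "?f id = (\<Prod>j\<in>UNIV - {p,q}. d j) * (A$p$p * A$q$q)"
    apply (simp add: prod_split3[OF pq, of "\<lambda>i. A$i$i"])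
    apply (subst prod.cong[OF refl, of _ _ d])
    using rows by (auto simp: ac_simps)
  also have "?f ?t = - ((\<Prod>j\<in>UNIV - {p,q}. d j) * (A$p$q * A$q$p))"
    apply (simp add: sign_swap_id pq prod_split3[OF pq, of "\<lambda>i. A$i$?t i"])
    apply (subst prod.cong[OF refl, of _ _ d])
    using rows by (auto simp: ac_simps Transposition.transpose_def)
  finally show ?thesis by (simp add: algebra_simps)
qed

(* ---- LA2 ---- *)
lemma det_map_cnj: "det (\<chi> i j. cnj (M$i$j)) = cnj (det (M :: complex^'m::finite^'m))"
  unfolding det_def by (simp add: cnj_sum cnj_prod)

lemma det_map_of_real: "det (\<chi> i j. complex_of_real (G$i$j)) = complex_of_real (det (G :: real^'m::finite^'m))"
  unfolding det_def by (simp add: of_real_sum of_real_prod)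

lemma det_M_formula:
  fixes M :: "complex^'m::finite^'m" and z c :: "'m \<Rightarrow> complex" and \<rho> :: complex
  assumes pq: "p \<noteq> q"
    and rowsK: "\<And>j k. j \<notin> {p,q} \<Longrightarrow>
       M$j$k = z j * ((if k = p then \<rho> else 0) + (if k = q then c j else 0) + (if k = j then \<i> else 0))"
  shows "det M = (\<Prod>j\<in>UNIV - {p,q}. \<i> * z j) *
     ((M$p$p + \<i> * \<rho> * (\<Sum>b\<in>UNIV - {p,q}. M$p$b)) * (M$q$q + \<i> * (\<Sum>b\<in>UNIV - {p,q}. c b * M$q$b))
      - (M$p$q + \<i> * (\<Sum>b\<in>UNIV - {p,q}. c b * M$p$b)) * (M$q$p + \<i> * \<rho> * (\<Sum>b\<in>UNIV - {p,q}. M$q$b)))"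
proof -
  let ?K = "UNIV - {p,q}"
  define E :: "complex^'m^'m" where
    "E = (\<chi> a b. if a = b then 1 else if a = p \<and> b \<in> ?K then \<i> * \<rho>
                  else if a = q \<and> b \<in> ?K then \<i> * c b else 0)"
  have detE: "det E = 1"
    by (subst det_two_block[OF pq, of E "\<lambda>j. 1"]) (auto simp: E_def pq)
  define T where "T = E ** transpose M"
  have detT: "det T = det M" by (simp add: T_def det_mul detE)
  have Tent: "T$a$j = (\<Sum>b\<in>UNIV. E$a$b * M$j$b)" for a j
    by (simp add: T_def matrix_matrix_mult_def transpose_def)
  have Trow: "T$a$j = M$j$a" if "a \<notin> {p,q}" for a j
  proof -
    have "T$a$j = (\<Sum>b\<in>UNIV. (if b = a then M$j$b else 0))"
      unfolding Tent by (rule sum.cong) (use that in \<open>auto simp: E_def\<close>)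
    then show ?thesis by simp
  qed
  have Tp: "T$p$j = M$j$p + \<i> * \<rho> * (\<Sum>b\<in>?K. M$j$b)" for j
  proof -
    have "T$p$j = E$p$p * M$j$p + E$p$q * M$j$q + (\<Sum>b\<in>?K. E$p$b * M$j$b)"
      unfolding Tent by (rule sum_split3[OF pq])
    also have "\<dots> = M$j$p + (\<Sum>b\<in>?K. \<i> * \<rho> * M$j$b)"
      using pq by (simp add: E_def) (rule sum.cong, auto)
    finally show ?thesis by (simp add: sum_distrib_left)
  qed
  have Tq: "T$q$j = M$j$q + \<i> * (\<Sum>b\<in>?K. c b * M$j$b)" for j
  proof -
    have "T$q$j = E$q$p * M$j$p + E$q$q * M$j$q + (\<Sum>b\<in>?K. E$q$b * M$j$b)"
      unfolding Tent by (rule sum_split3[OF pq])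
    also have "\<dots> = M$j$q + (\<Sum>b\<in>?K. \<i> * (c b * M$j$b))"
      using pq by (simp add: E_def mult.assoc) (rule sum.cong, auto)
    finally show ?thesis by (simp add: sum_distrib_left)
  qed
  have colK: "(transpose T)$j$k = (if k = j then \<i> * z j else 0)" if "j \<notin> {p,q}" for j k
  proof -
    have "(transpose T)$j$k = T$k$j" by (simp add: transpose_def)
    also have "\<dots> = (if k = j then \<i> * z j else 0)"
    proof (cases "k \<in> {p,q}")
      case False
      then show ?thesis using Trow[OF False] rowsK[OF that] that by auto
    next
      case True
      have s: "(\<Sum>b\<in>?K. f b * M$j$b) = f j * (z j * \<i>)" for f
      proof -
        have "(\<Sum>b\<in>?K. f b * M$j$b) = (\<Sum>b\<in>?K. if b = j then f j * (z j * \<i>) else 0)"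
          by (rule sum.cong) (use that pq in \<open>auto simp: rowsK\<close>)
        then show ?thesis using that by simp
      qed
      show ?thesis
      proof (cases "k = p")
        case True
        then show ?thesis using Tp[of j] s[of "\<lambda>_. 1"] rowsK[OF that, of p] that pq
          by (auto simp: algebra_simps)
      next
        case False
        then have "k = q" using \<open>k \<in> {p,q}\<close> by auto
        then show ?thesis using Tq[of j] s[of c] rowsK[OF that, of q] that pq
          by (auto simp: algebra_simps)
      qed
    qed
    finally show ?thesis .
  qed
  have "det M = det (transpose T)" by (simp add: detT)
  also have "\<dots> = (\<Prod>j\<in>?K. \<i> * z j) * ((transpose T)$p$p * (transpose T)$q$q - (transpose T)$p$q * (transpose T)$q$p)"
    by (rule det_two_block[OF pq colK]) 
  also have "\<dots> = (\<Prod>j\<in>?K. \<i> * z j) * (T$p$p * T$q$q - T$q$p * T$p$q)"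
    by (simp add: transpose_def)
  finally show ?thesis unfolding Tp Tq by (simp add: mult.commute)
qed

(* ---- LA3a ---- *)
lemma gram_det:
  fixes V :: "'m::finite \<Rightarrow> complex^'m"
  assumes lag: "\<And>k l. (\<Sum>j\<in>UNIV. Im (cnj (V k $ j) * V l $ j)) = 0"
  shows "det (\<chi> k l. V k \<bullet> V l :: real^'m^'m) = (cmod (det (\<chi> j k. V k $ j)))\<^sup>2"
proof -
  let ?G = "(\<chi> k l. V k \<bullet> V l :: real^'m^'m)"
  let ?M = "(\<chi> j k. V k $ j) :: complex^'m^'m"
  have ent: "complex_of_real (V k \<bullet> V l) = (\<Sum>j\<in>UNIV. cnj (V k $ j) * V l $ j)" for k l
  proof -
    have "(\<Sum>j\<in>UNIV. cnj (V k $ j) * V l $ j) =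
       complex_of_real (\<Sum>j\<in>UNIV. Re (cnj (V k $ j) * V l $ j)) + \<i> * complex_of_real (\<Sum>j\<in>UNIV. Im (cnj (V k $ j) * V l $ j))"
      by (simp add: complex_eq_iff Re_sum Im_sum)
    also have "\<dots> = complex_of_real (\<Sum>j\<in>UNIV. Re (cnj (V k $ j) * V l $ j))" using lag by simp
    also have "(\<Sum>j\<in>UNIV. Re (cnj (V k $ j) * V l $ j)) = V k \<bullet> V l"
      by (simp add: inner_vec_def inner_complex_def)
    finally show ?thesis by simp
  qed
  have meq: "(\<chi> k l. complex_of_real (?G$k$l)) = transpose (\<chi> j k. cnj (?M$j$k)) ** ?M"
    by (simp add: vec_eq_iff matrix_matrix_mult_def transpose_def ent)
  have "complex_of_real (det ?G) = det (\<chi> k l. complex_of_real (?G$k$l))"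
    using det_map_of_real[of ?G] by simp
  also have "\<dots> = cnj (det ?M) * det ?M"
    unfolding meq det_mul det_transpose det_map_cnj ..
  also have "\<dots> = complex_of_real ((cmod (det ?M))\<^sup>2)"
    by (simp add: complex_norm_square[symmetric] mult.commute)
  finally show ?thesis using of_real_eq_iff by blast
qed

(* ---- LA3b ---- *)
lemma inj_from_gram:
  fixes D :: "real^'m::finite \<Rightarrow> 'b::real_inner"
  assumes lin: "linear D" and nz: "det (\<chi> k l. D (axis k 1) \<bullet> D (axis l 1) :: real^'m^'m) \<noteq> 0"
  shows "inj D"
proof -
  let ?G = "(\<chi> k l. D (axis k 1) \<bullet> D (axis l 1) :: real^'m^'m)"
  have injG: "inj ((*v) ?G)"
    using det_nz_iff_inj[of "(*v) ?G"] nz matrix_vector_mul_linear[of ?G] matrix_of_matrix_vector_mul[of ?G] by simp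
  have rep: "D v = (\<Sum>l\<in>UNIV. v$l *\<^sub>R D (axis l 1))" for v
  proof -
    have "v = (\<Sum>l\<in>UNIV. v$l *\<^sub>R axis l 1)"
      using basis_expansion[of v] by (simp add: scalar_mult_eq_scaleR)
    then have "D v = D (\<Sum>l\<in>UNIV. v$l *\<^sub>R axis l 1)" by simp
    also have "\<dots> = (\<Sum>l\<in>UNIV. v$l *\<^sub>R D (axis l 1))" using lin by (simp add: linear_sum linear_scale)
    finally show ?thesis .
  qed
  have "v = 0" if "D v = 0" for v
  proof -
    have "?G *v v = 0"
    proof -
      have "(?G *v v)$k = D (axis k 1) \<bullet> D v" for k
        by (simp add: matrix_vector_mult_def rep[of v] inner_sum_right mult.commute)
      then show ?thesis using that by (simp add: vec_eq_iff)
    qed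
    then show "v = 0" using injG injD[OF injG, of v 0] by simp
  qed
  then show ?thesis using lin linear_injective_0 by blast
qed

(* ---- Geo ---- *)
locale geo =
  fixes a :: "'m::finite \<Rightarrow> int" and u \<theta> \<psi> :: "real \<Rightarrow> real" and \<epsilon> :: real and p q :: 'm
  assumes ap: "a p < 0" and aq: "0 < a q"
    and a_sum: "(\<Sum>j\<in>UNIV. a j) = 0"
    and pos: "\<And>j t. t \<in> {-\<epsilon><..<\<epsilon>} \<Longrightarrow> of_int (a j) * u t + 1 > 0"
    and du: "\<And>t. t \<in> {-\<epsilon><..<\<epsilon>} \<Longrightarrow>
              (u has_real_derivative (2 * sqrt (Qpoly a (u t)) * cos (\<theta> t))) (at t)"
    and dtheta: "\<And>t. t \<in> {-\<epsilon><..<\<epsilon>} \<Longrightarrow>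
              (\<theta> has_real_derivative
                 (- sqrt (Qpoly a (u t)) * sin (\<theta> t) *
                    (\<Sum>j\<in>UNIV. of_int (a j) / (of_int (a j) * u t + 1)))) (at t)"
    and dpsi: "\<And>t. t \<in> {-\<epsilon><..<\<epsilon>} \<Longrightarrow>
              (\<psi> has_real_derivative
                 (- sqrt (Qpoly a (u t)) * sin (\<theta> t) *
                    (\<Sum>j\<in>UNIV. (of_int (a j))\<^sup>2 / (of_int (a j) * u t + 1)))) (at t)"
begin

abbreviation "I \<equiv> {-\<epsilon><..<\<epsilon>}"
abbreviation "K \<equiv> UNIV - {p,q}"

definition "dd = real_of_int (a q - a p)"

lemma pq: "p \<noteq> q" using ap aq by auto
lemma dd_pos: "dd > 0" using ap aq by (simp add: dd_def)

definition "aS x = \<theta> (x$q) - (\<Sum>k\<in>K. x$k)"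
definition "aT x = \<psi> (x$q) - (\<Sum>k\<in>K. of_int (a k) * x$k)"
definition "alf x j = (if j = p then (of_int (a q) * aS x - aT x) / dd
   else if j = q then (aT x - of_int (a p) * aS x) / dd else x$j)"

definition "chart x = (\<chi> j. complex_of_real (x$p) * exp (\<i> * complex_of_real (alf x j)) *
   complex_of_real (sqrt (of_int (a j) * u (x$q) + 1)))"

definition "Udom = {x::real^'m. 0 < x$p \<and> x$q \<in> I}"

definition "Nset = {z :: complex^'m. \<exists>r t (\<alpha> :: 'm \<Rightarrow> real).
              r > 0 \<and> t \<in> {-\<epsilon><..<\<epsilon>} \<and>
              (\<Sum>j\<in>UNIV. \<alpha> j) = \<theta> t \<and>
              (\<Sum>j\<in>UNIV. of_int (a j) * \<alpha> j) = \<psi> t \<and>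
              z = (\<chi> j. complex_of_real r * exp (\<i> * complex_of_real (\<alpha> j)) *
                         complex_of_real (sqrt (of_int (a j) * u t + 1)))}"

lemma alfp: "alf x p = (of_int (a q) * aS x - aT x) / dd" by (simp add: alf_def)
lemma alfq: "alf x q = (aT x - of_int (a p) * aS x) / dd" using pq by (simp add: alf_def)
lemma alfK: "j \<notin> {p,q} \<Longrightarrow> alf x j = x$j" by (simp add: alf_def)

lemma alf_pq: "alf x p + alf x q = aS x" "of_int (a p) * alf x p + of_int (a q) * alf x q = aT x"
proof -
  have dn: "dd \<noteq> 0" using dd_pos by simp
  have "alf x p + alf x q = (of_int (a q) * aS x - aT x + (aT x - of_int (a p) * aS x)) / dd"
    unfolding alfp alfq by (rule add_divide_distrib[symmetric])
  also have "of_int (a q) * aS x - aT x + (aT x - of_int (a p) * aS x) = dd * aS x" by (simp add: dd_def algebra_simps)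
  finally show "alf x p + alf x q = aS x" using dn by simp
  have "of_int (a p) * alf x p + of_int (a q) * alf x q =
     (of_int (a p) * (of_int (a q) * aS x - aT x) + of_int (a q) * (aT x - of_int (a p) * aS x)) / dd"
    unfolding alfp alfq by (simp add: add_divide_distrib)
  also have "of_int (a p) * (of_int (a q) * aS x - aT x) + of_int (a q) * (aT x - of_int (a p) * aS x) = dd * aT x"
    by (simp add: dd_def algebra_simps)
  finally show "of_int (a p) * alf x p + of_int (a q) * alf x q = aT x" using dn by simp
qed

lemma alf_sum: "(\<Sum>j\<in>UNIV. alf x j) = \<theta> (x$q)"
proof -
  have "(\<Sum>j\<in>UNIV. alf x j) = alf x p + alf x q + (\<Sum>j\<in>K. alf x j)" by (rule sum_split3[OF pq])
  also have "(\<Sum>j\<in>K. alf x j) = (\<Sum>j\<in>K. x$j)" by (rule sum.cong) (auto simp: alf_def)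
  finally show ?thesis using alf_pq by (simp add: aS_def)
qed

lemma alf_asum: "(\<Sum>j\<in>UNIV. of_int (a j) * alf x j) = \<psi> (x$q)"
proof -
  have "(\<Sum>j\<in>UNIV. of_int (a j) * alf x j) = of_int (a p) * alf x p + of_int (a q) * alf x q + (\<Sum>j\<in>K. of_int (a j) * alf x j)"
    by (rule sum_split3[OF pq])
  also have "(\<Sum>j\<in>K. of_int (a j) * alf x j) = (\<Sum>j\<in>K. of_int (a j) * x$j)" by (rule sum.cong) (auto simp: alf_def)
  finally show ?thesis using alf_pq by (simp add: aT_def)
qed

lemma image_chart: "chart ` Udom = Nset"
proof
  show "chart ` Udom \<subseteq> Nset"
  proof
    fix z assume "z \<in> chart ` Udom"
    then obtain x where x: "x \<in> Udom" "z = chart x" by auto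
    show "z \<in> Nset" unfolding Nset_def mem_Collect_eq
      apply (rule exI[of _ "x$p"], rule exI[of _ "x$q"], rule exI[of _ "alf x"])
      using x alf_sum alf_asum by (auto simp: Udom_def chart_def)
  qed
next
  show "Nset \<subseteq> chart ` Udom"
  proof
    fix z assume "z \<in> Nset"
    then obtain r t \<alpha> where h: "r > 0" "t \<in> I" "(\<Sum>j\<in>UNIV. \<alpha> j) = \<theta> t"
      "(\<Sum>j\<in>UNIV. of_int (a j) * \<alpha> j) = \<psi> t"
      "z = (\<chi> j. complex_of_real r * exp (\<i> * complex_of_real (\<alpha> j)) *
                         complex_of_real (sqrt (of_int (a j) * u t + 1)))"
      unfolding Nset_def by blast
    define x :: "real^'m" where "x = (\<chi> j. if j = p then r else if j = q then t else \<alpha> j)"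
    have xp: "x$p = r" and xq: "x$q = t" using pq by (auto simp: x_def)
    have xK: "(\<Sum>k\<in>K. x$k) = (\<Sum>k\<in>K. \<alpha> k)" "(\<Sum>k\<in>K. of_int (a k) * x$k) = (\<Sum>k\<in>K. of_int (a k) * \<alpha> k)"
      by (auto simp: x_def intro!: sum.cong)
    have S: "aS x = \<alpha> p + \<alpha> q"
      using h(3) sum_split3[OF pq, of \<alpha>] by (simp add: aS_def xq xK)
    have T: "aT x = of_int (a p) * \<alpha> p + of_int (a q) * \<alpha> q"
      using h(4) sum_split3[OF pq, of "\<lambda>j. of_int (a j) * \<alpha> j"] by (simp add: aT_def xq xK)
    have dn: "dd \<noteq> 0" using dd_pos by simp
    have "alf x j = \<alpha> j" for j
    proof -
      consider "j = p" | "j = q" | "j \<notin> {p,q}" by auto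
      then show ?thesis
      proof cases
        case 1
        have "of_int (a q) * aS x - aT x = dd * \<alpha> p" unfolding S T by (simp add: dd_def algebra_simps)
        then show ?thesis using 1 dn by (simp add: alfp)
      next
        case 2
        have "aT x - of_int (a p) * aS x = dd * \<alpha> q" unfolding S T by (simp add: dd_def algebra_simps)
        then show ?thesis using 2 dn by (simp add: alfq)
      next
        case 3 then show ?thesis by (simp add: alfK x_def)
      qed
    qed
    then have "z = chart x" by (simp add: h(5) chart_def xp xq)
    moreover have "x \<in> Udom" using h by (simp add: Udom_def xp xq)
    ultimately show "z \<in> chart ` Udom" by blast
  qed
qed

lemma open_Udom: "open Udom"
proof -
  have "Udom = {x. 0 < x$p} \<inter> ({x. -\<epsilon> < x$q} \<inter> {x. x$q < \<epsilon>})" by (auto simp: Udom_def)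
  moreover have "open {x::real^'m. 0 < x$p}" by (intro open_Collect_less continuous_intros)
  moreover have "open {x::real^'m. -\<epsilon> < x$q}" by (intro open_Collect_less continuous_intros)
  moreover have "open {x::real^'m. x$q < \<epsilon>}" by (intro open_Collect_less continuous_intros)
  ultimately show ?thesis by auto
qed

end

(* ---- Geo2 ---- *)
lemma bounded_linear_axis: "bounded_linear (\<lambda>c::'a::euclidean_space. axis j c :: 'a^'n::finite)"
proof -
  have "linear (\<lambda>c::'a. axis j c :: 'a^'n)"
    by (rule linearI) (simp_all add: vec_eq_iff axis_def)
  then show ?thesis by (simp add: linear_conv_bounded_linear)
qed

lemma vec_sum_axis: "(\<chi> j. f j) = (\<Sum>j\<in>UNIV. axis j (f j) :: 'a::comm_monoid_add^'n::finite)"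
  by (simp add: vec_eq_iff sum_component axis_def if_distrib cong: if_cong)

lemma Ck_nth: "Ck_on k U (\<lambda>x. x $ i)"
  by (rule Ck_linear[OF bounded_linear_vec_nth Ck_id])

context geo
begin

lemma smooth_params: "Ck_on k I u" "Ck_on k I \<theta>" "Ck_on k I \<psi>"
  using ode_smooth[of I a u \<theta> \<psi> k] pos du dtheta dpsi by blast+

lemma Ck_q: "Ck_on k I f \<Longrightarrow> Ck_on k Udom (\<lambda>x. f (x$q))"
  by (rule Ck_compose[OF Ck_nth]) (auto simp: Udom_def)

lemma Ck_alf: "Ck_on k Udom (\<lambda>x. alf x j)"
proof -
  have S: "Ck_on k Udom aS" unfolding aS_def
    by (rule Ck_diff[OF Ck_q[OF smooth_params(2)] Ck_sum]) (auto intro: Ck_nth)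
  have T: "Ck_on k Udom aT" unfolding aT_def
    by (rule Ck_diff[OF Ck_q[OF smooth_params(3)] Ck_sum]) (auto intro: Ck_nth Ck_mult Ck_const)
  consider "j = p" | "j = q" | "j \<notin> {p,q}" by auto
  then show ?thesis
  proof cases
    case 1 then show ?thesis unfolding 1 alfp
      by (intro Ck_divide Ck_diff Ck_mult Ck_const S T) (use dd_pos in auto)
  next
    case 2 then show ?thesis unfolding 2 alfq
      by (intro Ck_divide Ck_diff Ck_mult Ck_const S T) (use dd_pos in auto)
  next
    case 3 then show ?thesis by (simp add: alfK Ck_nth)
  qed
qed

definition "cmp j x = complex_of_real (x$p) * exp (\<i> * complex_of_real (alf x j)) *
   complex_of_real (sqrt (of_int (a j) * u (x$q) + 1))"

lemma chart_cmp: "chart x = (\<Sum>j\<in>UNIV. axis j (cmp j x))"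
  unfolding chart_def cmp_def by (rule vec_sum_axis)

lemma Ck_cmp: "Ck_on k Udom (cmp j)"
  unfolding cmp_def
  apply (rule Ck_mult)
   apply (rule Ck_mult)
    apply (rule Ck_linear[OF bounded_linear_of_real Ck_nth])
   apply (rule Ck_cexp)
   apply (rule Ck_mult[OF Ck_const])
   apply (rule Ck_linear[OF bounded_linear_of_real Ck_alf])
  apply (rule Ck_linear[OF bounded_linear_of_real])
  apply (rule Ck_sqrt)
   apply (rule Ck_q)
   apply (rule Ck_add[OF Ck_mult[OF Ck_const smooth_params(1)] Ck_const])
  using pos by (auto simp: Udom_def)

lemma smooth_chart: "smooth_on Udom chart"
proof (rule smooth_onI)
  fix k
  have "Ck_on k Udom (\<lambda>x. \<Sum>j\<in>UNIV. axis j (cmp j x) :: complex^'m)"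
    by (rule Ck_sum) (auto intro: Ck_linear[OF bounded_linear_axis Ck_cmp])
  then show "Ck_on k Udom chart" by (simp add: chart_cmp[abs_def])
qed

end

(* ---- Geo3 ---- *)
lemma hd_nth: "((\<lambda>x::real^'n::finite. x $ i) has_derivative (\<lambda>v. v $ i)) F"
  by (rule bounded_linear_imp_has_derivative[OF bounded_linear_vec_nth])

lemma hd_divc: "(f has_derivative f') F \<Longrightarrow> ((\<lambda>x. f x / (c::real)) has_derivative (\<lambda>v. f' v / c)) F"
  by (rule bounded_linear.has_derivative[OF bounded_linear_divide])

context geo
begin

definition "sq t = sqrt (Qpoly a (u t))"
definition "S1 t = (\<Sum>j\<in>UNIV. of_int (a j) / (of_int (a j) * u t + 1))"
definition "S2 t = (\<Sum>j\<in>UNIV. (of_int (a j))\<^sup>2 / (of_int (a j) * u t + 1))"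
definition "du0 t = 2 * sq t * cos (\<theta> t)"
definition "dth0 t = - sq t * sin (\<theta> t) * S1 t"
definition "dps0 t = - sq t * sin (\<theta> t) * S2 t"

definition "dS x v = v$q * dth0 (x$q) - (\<Sum>k\<in>K. v$k)"
definition "dT x v = v$q * dps0 (x$q) - (\<Sum>k\<in>K. of_int (a k) * v$k)"
definition "dalf x v j = (if j = p then (of_int (a q) * dS x v - dT x v) / dd
   else if j = q then (dT x v - of_int (a p) * dS x v) / dd else v$j)"
definition "cc x j = of_int (a j) * du0 (x$q) / (2 * (of_int (a j) * u (x$q) + 1))"
definition "Dcmp x j v = cmp j x * (complex_of_real (v$p / x$p + v$q * cc x j) + \<i> * complex_of_real (dalf x v j))"
definition "Dchart x v = (\<chi> j. Dcmp x j v)"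

lemma dalfp: "dalf x v p = (of_int (a q) * dS x v - dT x v) / dd" by (simp add: dalf_def)
lemma dalfq: "dalf x v q = (dT x v - of_int (a p) * dS x v) / dd" using pq by (simp add: dalf_def)
lemma dalfK: "j \<notin> {p,q} \<Longrightarrow> dalf x v j = v$j" by (simp add: dalf_def)

lemma hd_theta: "x \<in> Udom \<Longrightarrow> ((\<lambda>x. \<theta> (x$q)) has_derivative (\<lambda>v. v$q * dth0 (x$q))) (at x)"
  by (rule DERIV_compose_FDERIV[OF _ hd_nth]) (use dtheta[of "x$q"] in \<open>auto simp: Udom_def dth0_def sq_def S1_def\<close>)

lemma hd_psi: "x \<in> Udom \<Longrightarrow> ((\<lambda>x. \<psi> (x$q)) has_derivative (\<lambda>v. v$q * dps0 (x$q))) (at x)"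
  by (rule DERIV_compose_FDERIV[OF _ hd_nth]) (use dpsi[of "x$q"] in \<open>auto simp: Udom_def dps0_def sq_def S2_def\<close>)

lemma hd_aS: "x \<in> Udom \<Longrightarrow> (aS has_derivative dS x) (at x)"
  unfolding aS_def[abs_def] dS_def[abs_def]
  by (intro has_derivative_diff hd_theta has_derivative_sum hd_nth)

lemma hd_aT: "x \<in> Udom \<Longrightarrow> (aT has_derivative dT x) (at x)"
  unfolding aT_def[abs_def] dT_def[abs_def]
  by (intro has_derivative_diff hd_psi has_derivative_sum has_derivative_mult_right hd_nth)

lemma hd_alf: "x \<in> Udom \<Longrightarrow> ((\<lambda>x. alf x j) has_derivative (\<lambda>v. dalf x v j)) (at x)"
proof -
  assume x: "x \<in> Udom"
  consider "j = p" | "j = q" | "j \<notin> {p,q}" by auto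
  then show ?thesis
  proof cases
    case 1 then show ?thesis unfolding 1 alfp dalfp
      by (intro hd_divc has_derivative_diff has_derivative_mult_right hd_aS[OF x] hd_aT[OF x]
          has_derivative_const)
  next
    case 2 then show ?thesis unfolding 2 alfq dalfq
      by (intro hd_divc has_derivative_diff has_derivative_mult_right hd_aS[OF x] hd_aT[OF x]
          has_derivative_const)
  next
    case 3 then show ?thesis by (simp add: alfK dalfK hd_nth)
  qed
qed

lemma hd_w: "x \<in> Udom \<Longrightarrow> ((\<lambda>x. sqrt (of_int (a j) * u (x$q) + 1)) has_derivative
    (\<lambda>v. v$q * (inverse (sqrt (of_int (a j) * u (x$q) + 1)) / 2 * (of_int (a j) * du0 (x$q))))) (at x)"
proof -
  assume x: "x \<in> Udom"
  then have t: "x$q \<in> I" by (simp add: Udom_def)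
  have d1: "((\<lambda>t. of_int (a j) * u t + 1) has_real_derivative (of_int (a j) * du0 (x$q))) (at (x$q))"
    using du[OF t] by (auto intro!: derivative_eq_intros simp: du0_def sq_def)
  have d2: "((\<lambda>t. sqrt (of_int (a j) * u t + 1)) has_real_derivative
      (inverse (sqrt (of_int (a j) * u (x$q) + 1)) / 2 * (of_int (a j) * du0 (x$q)))) (at (x$q))"
    by (rule DERIV_chain2[OF DERIV_real_sqrt[OF pos[OF t]] d1])
  show ?thesis by (rule DERIV_compose_FDERIV[OF d2 hd_nth])
qed

lemma hd_cmp: "x \<in> Udom \<Longrightarrow> (cmp j has_derivative Dcmp x j) (at x)"
proof -
  assume x: "x \<in> Udom"
  let ?X = "of_int (a j) * u (x$q) + 1"
  have X: "?X > 0" using x pos by (simp add: Udom_def)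
  have r: "x$p > 0" using x by (simp add: Udom_def)
  have R: "((\<lambda>x. complex_of_real (x$p)) has_derivative (\<lambda>v. complex_of_real (v$p))) (at x)"
    by (rule bounded_linear.has_derivative[OF bounded_linear_of_real hd_nth])
  have A: "((\<lambda>x. \<i> * complex_of_real (alf x j)) has_derivative (\<lambda>v. \<i> * complex_of_real (dalf x v j))) (at x)"
    by (intro has_derivative_mult_right bounded_linear.has_derivative[OF bounded_linear_of_real] hd_alf x)
  have E: "((\<lambda>x. exp (\<i> * complex_of_real (alf x j))) has_derivative
     (\<lambda>v. exp (\<i> * complex_of_real (alf x j)) * (\<i> * complex_of_real (dalf x v j)))) (at x)"
    by (rule has_derivative_compose[OF A has_field_derivative_imp_has_derivative[OF DERIV_exp]])
  have W: "((\<lambda>x. complex_of_real (sqrt (of_int (a j) * u (x$q) + 1))) has_derivative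
    (\<lambda>v. complex_of_real (v$q * (inverse (sqrt ?X) / 2 * (of_int (a j) * du0 (x$q)))))) (at x)"
    by (rule bounded_linear.has_derivative[OF bounded_linear_of_real hd_w[OF x]])
  have all: "(cmp j has_derivative (\<lambda>v.
     (complex_of_real (x$p) * exp (\<i> * complex_of_real (alf x j))) *
        complex_of_real (v$q * (inverse (sqrt ?X) / 2 * (of_int (a j) * du0 (x$q)))) +
     (complex_of_real (x$p) * (exp (\<i> * complex_of_real (alf x j)) * (\<i> * complex_of_real (dalf x v j))) +
      complex_of_real (v$p) * exp (\<i> * complex_of_real (alf x j))) * complex_of_real (sqrt ?X))) (at x)"
    unfolding cmp_def[abs_def] by (intro has_derivative_mult R E W)
  show ?thesis
  proof (rule has_derivative_eq_rhs[OF all], rule ext)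
    fix v
    have sX: "sqrt ?X > 0" using X by simp
    have w: "v$q * (inverse (sqrt ?X) / 2 * (of_int (a j) * du0 (x$q))) = sqrt ?X * (v$q * cc x j)"
      using X sX by (simp add: cc_def field_simps)
    show "complex_of_real (x$p) * exp (\<i> * complex_of_real (alf x j)) *
        complex_of_real (v$q * (inverse (sqrt ?X) / 2 * (of_int (a j) * du0 (x$q)))) +
     (complex_of_real (x$p) * (exp (\<i> * complex_of_real (alf x j)) * (\<i> * complex_of_real (dalf x v j))) +
      complex_of_real (v$p) * exp (\<i> * complex_of_real (alf x j))) * complex_of_real (sqrt ?X) = Dcmp x j v"
      unfolding w Dcmp_def cmp_def using r
      by (simp add: field_simps)
  qed
qed

lemma Dchart_sum: "Dchart x v = (\<Sum>j\<in>UNIV. axis j (Dcmp x j v))"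
  unfolding Dchart_def by (rule vec_sum_axis)

lemma hd_chart: "x \<in> Udom \<Longrightarrow> (chart has_derivative Dchart x) (at x)"
  unfolding chart_cmp[abs_def] Dchart_sum[abs_def]
  by (intro has_derivative_sum bounded_linear.has_derivative[OF bounded_linear_axis] hd_cmp)

end

(* ---- Geo4 ---- *)
context geo
begin

lemma ode_id: "t \<in> I \<Longrightarrow> u t * dps0 t + dth0 t = 0"
proof -
  assume t: "t \<in> I"
  have "u t * S2 t + S1 t = (\<Sum>j\<in>UNIV. of_int (a j))"
    unfolding S1_def S2_def sum_distrib_left sum.distrib[symmetric]
  proof (rule sum.cong[OF refl])
    fix j
    have X: "of_int (a j) * u t + 1 > 0" using pos[OF t] by simp
    have "u t * ((of_int (a j))\<^sup>2 / (of_int (a j) * u t + 1)) + of_int (a j) / (of_int (a j) * u t + 1)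
       = (of_int (a j) * (of_int (a j) * u t + 1)) / (of_int (a j) * u t + 1)"
      by (simp add: add_divide_distrib power2_eq_square algebra_simps)
    also have "\<dots> = of_int (a j)" using X by simp
    finally show "u t * ((of_int (a j))\<^sup>2 / (of_int (a j) * u t + 1)) + of_int (a j) / (of_int (a j) * u t + 1) = of_int (a j)" .
  qed
  also have "\<dots> = 0" using a_sum by (metis of_int_0 of_int_sum)
  finally have e: "u t * S2 t + S1 t = 0" .
  have "u t * dps0 t + dth0 t = - sq t * sin (\<theta> t) * (u t * S2 t + S1 t)"
    by (simp add: dps0_def dth0_def algebra_simps)
  then show ?thesis unfolding e by simp
qed

lemma dalf_pq: "dalf x v p + dalf x v q = dS x v" "of_int (a p) * dalf x v p + of_int (a q) * dalf x v q = dT x v"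
proof -
  have dn: "dd \<noteq> 0" using dd_pos by simp
  have "dalf x v p + dalf x v q = (of_int (a q) * dS x v - dT x v + (dT x v - of_int (a p) * dS x v)) / dd"
    unfolding dalfp dalfq by (rule add_divide_distrib[symmetric])
  also have "of_int (a q) * dS x v - dT x v + (dT x v - of_int (a p) * dS x v) = dd * dS x v" by (simp add: dd_def algebra_simps)
  finally show "dalf x v p + dalf x v q = dS x v" using dn by simp
  have "of_int (a p) * dalf x v p + of_int (a q) * dalf x v q =
     (of_int (a p) * (of_int (a q) * dS x v - dT x v) + of_int (a q) * (dT x v - of_int (a p) * dS x v)) / dd"
    unfolding dalfp dalfq by (simp add: add_divide_distrib)
  also have "of_int (a p) * (of_int (a q) * dS x v - dT x v) + of_int (a q) * (dT x v - of_int (a p) * dS x v) = dd * dT x v"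
    by (simp add: dd_def algebra_simps)
  finally show "of_int (a p) * dalf x v p + of_int (a q) * dalf x v q = dT x v" using dn by simp
qed

lemma dalf_sum: "(\<Sum>j\<in>UNIV. dalf x v j) = v$q * dth0 (x$q)"
proof -
  have "(\<Sum>j\<in>UNIV. dalf x v j) = dalf x v p + dalf x v q + (\<Sum>j\<in>K. dalf x v j)" by (rule sum_split3[OF pq])
  also have "(\<Sum>j\<in>K. dalf x v j) = (\<Sum>j\<in>K. v$j)" by (rule sum.cong) (auto simp: dalfK)
  finally show ?thesis using dalf_pq by (simp add: dS_def)
qed

lemma dalf_asum: "(\<Sum>j\<in>UNIV. of_int (a j) * dalf x v j) = v$q * dps0 (x$q)"
proof -
  have "(\<Sum>j\<in>UNIV. of_int (a j) * dalf x v j) = of_int (a p) * dalf x v p + of_int (a q) * dalf x v q + (\<Sum>j\<in>K. of_int (a j) * dalf x v j)"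
    by (rule sum_split3[OF pq])
  also have "(\<Sum>j\<in>K. of_int (a j) * dalf x v j) = (\<Sum>j\<in>K. of_int (a j) * v$j)" by (rule sum.cong) (auto simp: dalfK)
  finally show ?thesis using dalf_pq by (simp add: dT_def)
qed

definition "Xw x j = of_int (a j) * u (x$q) + 1"
definition "Aj x j v = v$p / x$p + v$q * cc x j"

lemma Xw_pos: "x \<in> Udom \<Longrightarrow> Xw x j > 0" using pos by (simp add: Xw_def Udom_def)

lemma Xw_cc: "x \<in> Udom \<Longrightarrow> Xw x j * cc x j = of_int (a j) * du0 (x$q) / 2"
  using Xw_pos[of x j] by (simp add: Xw_def cc_def field_simps)

lemma sym_sum: "x \<in> Udom \<Longrightarrow> (\<Sum>j\<in>UNIV. Xw x j * Aj x j v * dalf x w j) = v$q * w$q * du0 (x$q) * dps0 (x$q) / 2"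
proof -
  assume x: "x \<in> Udom"
  have "(\<Sum>j\<in>UNIV. Xw x j * Aj x j v * dalf x w j) =
     v$p / x$p * ((\<Sum>j\<in>UNIV. u (x$q) * (of_int (a j) * dalf x w j)) + (\<Sum>j\<in>UNIV. dalf x w j))
      + v$q * (du0 (x$q) / 2) * (\<Sum>j\<in>UNIV. of_int (a j) * dalf x w j)"
    unfolding sum_distrib_left sum.distrib[symmetric]
  proof (rule sum.cong[OF refl])
    fix j
    have "Xw x j * Aj x j v * dalf x w j = v$p / x$p * (Xw x j * dalf x w j) + v$q * (Xw x j * cc x j) * dalf x w j"
      by (simp add: Aj_def algebra_simps)
    also have "\<dots> = v$p / x$p * (u (x$q) * (of_int (a j) * dalf x w j) + dalf x w j) + v$q * (du0 (x$q) / 2) * (of_int (a j) * dalf x w j)"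
      unfolding Xw_cc[OF x] by (simp add: Xw_def algebra_simps)
    finally show "Xw x j * Aj x j v * dalf x w j = v$p / x$p * (u (x$q) * (of_int (a j) * dalf x w j) + dalf x w j) + v$q * (du0 (x$q) / 2) * (of_int (a j) * dalf x w j)" .
  qed
  also have "\<dots> = v$p / x$p * (w$q * (u (x$q) * dps0 (x$q) + dth0 (x$q))) + v$q * w$q * du0 (x$q) * dps0 (x$q) / 2"
    unfolding sum_distrib_left[symmetric] dalf_sum dalf_asum by (simp add: algebra_simps)
  also have "\<dots> = v$q * w$q * du0 (x$q) * dps0 (x$q) / 2"
    using ode_id[of "x$q"] x by (simp add: Udom_def)
  finally show ?thesis .
qed

lemma cmp_norm: "x \<in> Udom \<Longrightarrow> cnj (cmp j x) * cmp j x = complex_of_real ((x$p)\<^sup>2 * Xw x j)"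
proof -
  assume x: "x \<in> Udom"
  have "cnj (cmp j x) * cmp j x = complex_of_real ((cmod (cmp j x))\<^sup>2)"
    by (metis complex_norm_square mult.commute of_real_power)
  also have "cmod (cmp j x) = \<bar>x$p\<bar> * sqrt (Xw x j)"
    unfolding cmp_def using Xw_pos[OF x] by (simp add: norm_mult Xw_def) (metis abs_of_nonneg less_eq_real_def real_sqrt_ge_zero)
  finally have e: "cnj (cmp j x) * cmp j x = complex_of_real ((\<bar>x$p\<bar> * sqrt (Xw x j))\<^sup>2)" .
  have "(\<bar>x$p\<bar> * sqrt (Xw x j))\<^sup>2 = (x$p)\<^sup>2 * Xw x j"
    using Xw_pos[OF x, of j] by (simp add: power_mult_distrib)
  then show ?thesis unfolding e by simp
qed

lemma Dchart_nth: "Dchart x v $ j = Dcmp x j v" by (simp add: Dchart_def)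

lemma Dcmp_eq: "Dcmp x j v = cmp j x * (complex_of_real (Aj x j v) + \<i> * complex_of_real (dalf x v j))"
  by (simp add: Dcmp_def Aj_def)

lemma lagrangian: "x \<in> Udom \<Longrightarrow> (\<Sum>j\<in>UNIV. Im (cnj (Dchart x v $ j) * Dchart x w $ j)) = 0"
proof -
  assume x: "x \<in> Udom"
  have "Im (cnj (Dchart x v $ j) * Dchart x w $ j) =
     (x$p)\<^sup>2 * (Xw x j * Aj x j v * dalf x w j - Xw x j * Aj x j w * dalf x v j)" for j
  proof -
    have "cnj (Dchart x v $ j) * Dchart x w $ j = (cnj (cmp j x) * cmp j x) *
      (cnj (complex_of_real (Aj x j v) + \<i> * complex_of_real (dalf x v j)) * (complex_of_real (Aj x j w) + \<i> * complex_of_real (dalf x w j)))"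
      unfolding Dchart_nth Dcmp_eq complex_cnj_mult by (simp only: ac_simps)
    also have "\<dots> = complex_of_real ((x$p)\<^sup>2 * Xw x j) *
      (cnj (complex_of_real (Aj x j v) + \<i> * complex_of_real (dalf x v j)) * (complex_of_real (Aj x j w) + \<i> * complex_of_real (dalf x w j)))"
      unfolding cmp_norm[OF x] ..
    finally have e: "cnj (Dchart x v $ j) * Dchart x w $ j = complex_of_real ((x$p)\<^sup>2 * Xw x j) *
      (cnj (complex_of_real (Aj x j v) + \<i> * complex_of_real (dalf x v j)) * (complex_of_real (Aj x j w) + \<i> * complex_of_real (dalf x w j)))" .
    show ?thesis unfolding e by (simp add: algebra_simps)
  qed
  then have "(\<Sum>j\<in>UNIV. Im (cnj (Dchart x v $ j) * Dchart x w $ j)) =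
     (\<Sum>j\<in>UNIV. (x$p)\<^sup>2 * (Xw x j * Aj x j v * dalf x w j - Xw x j * Aj x j w * dalf x v j))"
    by (rule sum.cong[OF refl])
  also have "\<dots> = (x$p)\<^sup>2 * ((\<Sum>j\<in>UNIV. Xw x j * Aj x j v * dalf x w j) - (\<Sum>j\<in>UNIV. Xw x j * Aj x j w * dalf x v j))"
    by (simp add: sum_distrib_left[symmetric] sum_subtractf)
  also have "\<dots> = 0" unfolding sym_sum[OF x] by simp
  finally show ?thesis .
qed

end

(* ---- Geo5 ---- *)
lemma ax1: "(axis k (1::real) :: real^'n::finite) $ i = (if i = k then 1 else 0)"
  by (simp add: axis_def)

context geo
begin

definition "Mx x = (\<chi> j k. Dchart x (axis k 1) $ j :: complex^'m^'m)"
definition "gp x = (of_int (a q) * dth0 (x$q) - dps0 (x$q)) / dd"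
definition "gq x = (dps0 (x$q) - of_int (a p) * dth0 (x$q)) / dd"
definition "bp b = (of_int (a b) - of_int (a q)) / dd"
definition "bq b = (of_int (a p) - of_int (a b)) / dd"

lemma Mx_ent: "Mx x $ j $ k = cmp j x * (complex_of_real (Aj x j (axis k 1)) + \<i> * complex_of_real (dalf x (axis k 1) j))"
  by (simp add: Mx_def Dchart_nth Dcmp_eq)

lemma dS_ax: "dS x (axis k 1) = (if k = q then dth0 (x$q) else 0) - (if k \<in> K then 1 else 0)"
  by (simp add: dS_def ax1)

lemma dT_ax: "dT x (axis k 1) = (if k = q then dps0 (x$q) else 0) - (if k \<in> K then of_int (a k) else 0)"
  by (simp add: dT_def ax1 if_distrib cong: if_cong)

lemma Aj_ax: "Aj x j (axis k 1) = (if k = p then 1 / x$p else 0) + (if k = q then cc x j else 0)"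
  by (simp add: Aj_def ax1)

lemma rowsK: "j \<notin> {p,q} \<Longrightarrow> Mx x $ j $ k = cmp j x * ((if k = p then complex_of_real (1 / x$p) else 0) +
     (if k = q then complex_of_real (cc x j) else 0) + (if k = j then \<i> else 0))"
  unfolding Mx_ent Aj_ax using pq by (auto simp: dalfK ax1)

lemma ent_pp: "Mx x $ p $ p = cmp p x * complex_of_real (1 / x$p)"
  unfolding Mx_ent Aj_ax dalfp dS_ax dT_ax using pq by simp
lemma ent_qp: "Mx x $ q $ p = cmp q x * complex_of_real (1 / x$p)"
  unfolding Mx_ent Aj_ax dalfq dS_ax dT_ax using pq by simp
lemma ent_pq: "Mx x $ p $ q = cmp p x * (complex_of_real (cc x p) + \<i> * complex_of_real (gp x))"
  unfolding Mx_ent Aj_ax dalfp dS_ax dT_ax gp_def using pq by simp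
lemma ent_qq: "Mx x $ q $ q = cmp q x * (complex_of_real (cc x q) + \<i> * complex_of_real (gq x))"
  unfolding Mx_ent Aj_ax dalfq dS_ax dT_ax gq_def using pq by simp
lemma ent_pb: "b \<in> K \<Longrightarrow> Mx x $ p $ b = cmp p x * (\<i> * complex_of_real (bp b))"
  unfolding Mx_ent Aj_ax dalfp dS_ax dT_ax bp_def by (auto simp: diff_divide_distrib algebra_simps)
lemma ent_qb: "b \<in> K \<Longrightarrow> Mx x $ q $ b = cmp q x * (\<i> * complex_of_real (bq b))"
  unfolding Mx_ent Aj_ax dalfq dS_ax dT_ax bq_def by (auto simp: diff_divide_distrib algebra_simps)

end

(* ---- Geo6 ---- *)
lemma ring_id:
  fixes zp zq \<rho> cp cq gp gq Bp Bq Cp Cq :: complex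
  shows "(zp * \<rho> + \<i> * \<rho> * (zp * (\<i> * Bp))) * (zq * (cq + \<i> * gq) + \<i> * (zq * (\<i> * Cq)))
    - (zp * (cp + \<i> * gp) + \<i> * (zp * (\<i> * Cp))) * (zq * \<rho> + \<i> * \<rho> * (zq * (\<i> * Bq)))
    = zp * zq * \<rho> * ((1 - Bp) * (cq - Cq + \<i> * gq) - (cp - Cp + \<i> * gp) * (1 - Bq))"
proof -
  have ii: "\<i> * \<i> = -1" by simp
  show ?thesis by (simp add: algebra_simps ii)
qed

lemma sqrt_prod: "finite S \<Longrightarrow> sqrt (\<Prod>i\<in>S. f i) = (\<Prod>i\<in>S. sqrt (f i))"
  by (induction rule: finite_induct) (auto simp: real_sqrt_mult)

context geo
begin

definition "Bp = (\<Sum>b\<in>K. bp b)"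
definition "Bq = (\<Sum>b\<in>K. bq b)"
definition "Cp x = (\<Sum>b\<in>K. cc x b * bp b)"
definition "Cq x = (\<Sum>b\<in>K. cc x b * bq b)"

lemma sums_M:
  "(\<Sum>b\<in>K. Mx x $ p $ b) = cmp p x * (\<i> * complex_of_real Bp)"
  "(\<Sum>b\<in>K. Mx x $ q $ b) = cmp q x * (\<i> * complex_of_real Bq)"
  "(\<Sum>b\<in>K. complex_of_real (cc x b) * Mx x $ p $ b) = cmp p x * (\<i> * complex_of_real (Cp x))"
  "(\<Sum>b\<in>K. complex_of_real (cc x b) * Mx x $ q $ b) = cmp q x * (\<i> * complex_of_real (Cq x))"
proof -
  show "(\<Sum>b\<in>K. Mx x $ p $ b) = cmp p x * (\<i> * complex_of_real Bp)"
    unfolding Bp_def of_real_sum sum_distrib_left by (rule sum.cong) (auto simp: ent_pb)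
  show "(\<Sum>b\<in>K. Mx x $ q $ b) = cmp q x * (\<i> * complex_of_real Bq)"
    unfolding Bq_def of_real_sum sum_distrib_left by (rule sum.cong) (auto simp: ent_qb)
  show "(\<Sum>b\<in>K. complex_of_real (cc x b) * Mx x $ p $ b) = cmp p x * (\<i> * complex_of_real (Cp x))"
    unfolding Cp_def of_real_sum sum_distrib_left by (rule sum.cong) (auto simp: ent_pb algebra_simps)
  show "(\<Sum>b\<in>K. complex_of_real (cc x b) * Mx x $ q $ b) = cmp q x * (\<i> * complex_of_real (Cq x))"
    unfolding Cq_def of_real_sum sum_distrib_left by (rule sum.cong) (auto simp: ent_qb algebra_simps)
qed

definition "Re0 x = (1 - Bp) * (cc x q - Cq x) - (cc x p - Cp x) * (1 - Bq)"
definition "Im0 x = (1 - Bp) * gq x - gp x * (1 - Bq)"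

lemma det_Mx1: "det (Mx x) = (\<Prod>j\<in>K. \<i> * cmp j x) *
   (cmp p x * cmp q x * complex_of_real (1 / x$p) * (complex_of_real (Re0 x) + \<i> * complex_of_real (Im0 x)))"
proof -
  have "det (Mx x) = (\<Prod>j\<in>K. \<i> * cmp j x) *
     ((Mx x$p$p + \<i> * complex_of_real (1 / x$p) * (\<Sum>b\<in>K. Mx x$p$b)) * (Mx x$q$q + \<i> * (\<Sum>b\<in>K. complex_of_real (cc x b) * Mx x$q$b))
      - (Mx x$p$q + \<i> * (\<Sum>b\<in>K. complex_of_real (cc x b) * Mx x$p$b)) * (Mx x$q$p + \<i> * complex_of_real (1 / x$p) * (\<Sum>b\<in>K. Mx x$q$b)))"
    by (rule det_M_formula[OF pq rowsK])
  also have "\<dots> = (\<Prod>j\<in>K. \<i> * cmp j x) *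
   (cmp p x * cmp q x * complex_of_real (1 / x$p) * ((1 - complex_of_real Bp) * (complex_of_real (cc x q) - complex_of_real (Cq x) + \<i> * complex_of_real (gq x))
     - (complex_of_real (cc x p) - complex_of_real (Cp x) + \<i> * complex_of_real (gp x)) * (1 - complex_of_real Bq)))"
    unfolding sums_M ent_pp ent_qq ent_pq ent_qp ring_id ..
  also have "(1 - complex_of_real Bp) * (complex_of_real (cc x q) - complex_of_real (Cq x) + \<i> * complex_of_real (gq x))
     - (complex_of_real (cc x p) - complex_of_real (Cp x) + \<i> * complex_of_real (gp x)) * (1 - complex_of_real Bq)
     = complex_of_real (Re0 x) + \<i> * complex_of_real (Im0 x)"
    by (simp add: Re0_def Im0_def algebra_simps)
  finally show ?thesis .
qed

end

(* ---- Geo7 ---- *)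
context geo
begin

lemma card_K: "card K = CARD('m) - 2" and card_K_real: "real (card K) = real CARD('m) - 2"
proof -
  have "card K = CARD('m) - card {p,q}" by (simp add: card_Diff_subset)
  then show "card K = CARD('m) - 2" using pq by simp
  moreover have "CARD('m) \<ge> 2"
  proof -
    have "card {p,q} \<le> CARD('m)" by (rule card_mono) auto
    then show ?thesis using pq by simp
  qed
  ultimately show "real (card K) = real CARD('m) - 2" by simp
qed

lemma sumK_a: "(\<Sum>b\<in>K. real_of_int (a b)) = - of_int (a p) - of_int (a q)"
proof -
  have "(\<Sum>j\<in>UNIV. real_of_int (a j)) = 0" using a_sum by (metis of_int_0 of_int_sum)
  then show ?thesis using sum_split3[OF pq, of "\<lambda>j. real_of_int (a j)"] by simp
qed

lemma oneBp: "1 - Bp = real CARD('m) * of_int (a q) / dd"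
proof -
  have dn: "dd \<noteq> 0" using dd_pos by simp
  have "Bp = ((\<Sum>b\<in>K. real_of_int (a b)) - real (card K) * of_int (a q)) / dd"
    unfolding Bp_def bp_def by (simp add: sum_divide_distrib[symmetric] sum_subtractf)
  then have "Bp * dd = (- of_int (a p) - of_int (a q)) - (real CARD('m) - 2) * of_int (a q)"
    using dn by (simp add: sumK_a card_K_real)
  then have "(1 - Bp) * dd = real CARD('m) * of_int (a q)"
    by (simp add: dd_def algebra_simps)
  then show ?thesis using dn by (simp add: field_simps)
qed

lemma oneBq: "1 - Bq = - real CARD('m) * of_int (a p) / dd"
proof -
  have dn: "dd \<noteq> 0" using dd_pos by simp
  have "Bq = (real (card K) * of_int (a p) - (\<Sum>b\<in>K. real_of_int (a b))) / dd"
    unfolding Bq_def bq_def by (simp add: sum_divide_distrib[symmetric] sum_subtractf)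
  then have "Bq * dd = (real CARD('m) - 2) * of_int (a p) - (- of_int (a p) - of_int (a q))"
    using dn by (simp add: sumK_a card_K_real)
  then have "(1 - Bq) * dd = - real CARD('m) * of_int (a p)"
    by (simp add: dd_def algebra_simps)
  then show ?thesis using dn by (simp add: field_simps)
qed

lemma CpCq: "of_int (a q) * Cq x + of_int (a p) * Cp x = - (\<Sum>b\<in>K. of_int (a b) * cc x b)"
proof -
  have dn: "dd \<noteq> 0" using dd_pos by simp
  have "of_int (a q) * Cq x + of_int (a p) * Cp x = (\<Sum>b\<in>K. cc x b * (of_int (a q) * bq b + of_int (a p) * bp b))"
    unfolding Cp_def Cq_def sum_distrib_left sum.distrib[symmetric] by (rule sum.cong) (auto simp: algebra_simps)
  also have "\<dots> = (\<Sum>b\<in>K. - (of_int (a b) * cc x b))"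
  proof (rule sum.cong[OF refl])
    fix b
    have "of_int (a q) * bq b + of_int (a p) * bp b = (of_int (a b) * (of_int (a p) - of_int (a q))) / dd"
      unfolding bp_def bq_def by (simp add: add_divide_distrib[symmetric] algebra_simps)
    also have "\<dots> = - of_int (a b)" using dn by (simp add: dd_def field_simps)
    finally show "cc x b * (of_int (a q) * bq b + of_int (a p) * bp b) = - (of_int (a b) * cc x b)" by simp
  qed
  finally show ?thesis by (simp add: sum_negf)
qed

lemma sum_acc: "x \<in> Udom \<Longrightarrow> (\<Sum>j\<in>UNIV. of_int (a j) * cc x j) = du0 (x$q) * S2 (x$q) / 2"
  unfolding S2_def sum_distrib_left sum_divide_distrib
  by (rule sum.cong) (auto simp: cc_def power2_eq_square field_simps)

lemma Re0_eq: "x \<in> Udom \<Longrightarrow> Re0 x = real CARD('m) / dd * (du0 (x$q) * S2 (x$q) / 2)"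
proof -
  assume x: "x \<in> Udom"
  have "Re0 x = real CARD('m) / dd * (of_int (a q) * cc x q + of_int (a p) * cc x p - (of_int (a q) * Cq x + of_int (a p) * Cp x))"
    unfolding Re0_def oneBp oneBq by (simp add: algebra_simps)
  also have "of_int (a q) * cc x q + of_int (a p) * cc x p - (of_int (a q) * Cq x + of_int (a p) * Cp x)
     = (\<Sum>j\<in>UNIV. of_int (a j) * cc x j)"
    unfolding CpCq sum_split3[OF pq, of "\<lambda>j. of_int (a j) * cc x j"] by simp
  finally show ?thesis unfolding sum_acc[OF x] .
qed

lemma Im0_eq: "Im0 x = real CARD('m) / dd * dps0 (x$q)"
proof -
  have dn: "dd \<noteq> 0" using dd_pos by simp
  have "Im0 x = real CARD('m) / dd * (of_int (a q) * gq x + of_int (a p) * gp x)"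
    unfolding Im0_def oneBp oneBq by (simp add: algebra_simps)
  also have "of_int (a q) * gq x + of_int (a p) * gp x = dps0 (x$q)"
  proof -
    have "of_int (a q) * gq x + of_int (a p) * gp x = (dd * dps0 (x$q)) / dd"
      unfolding gp_def gq_def by (simp add: add_divide_distrib[symmetric] dd_def algebra_simps)
    then show ?thesis using dn by simp
  qed
  finally show ?thesis .
qed

end

(* ---- Geo8 ---- *)
context geo
begin

definition "P x = x$p ^ CARD('m) / x$p * (real CARD('m) / dd) * Qpoly a (u (x$q)) * S2 (x$q)"

lemma S2_pos: "x \<in> Udom \<Longrightarrow> S2 (x$q) > 0"
proof -
  assume x: "x \<in> Udom"
  have X: "of_int (a j) * u (x$q) + 1 > 0" for j using Xw_pos[OF x, of j] by (simp add: Xw_def)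
  show ?thesis unfolding S2_def
    by (rule sum_pos2[where i = q]) (use X aq in \<open>auto intro!: divide_pos_pos divide_nonneg_pos\<close>)
qed

lemma P_pos: "x \<in> Udom \<Longrightarrow> P x > 0"
proof -
  assume x: "x \<in> Udom"
  have r: "x$p > 0" using x by (simp add: Udom_def)
  have Q: "Qpoly a (u (x$q)) > 0" by (rule Qpoly_pos) (use Xw_pos[OF x] in \<open>simp add: Xw_def\<close>)
  have "CARD('m) > 0" by simp
  then show ?thesis unfolding P_def using r Q S2_pos[OF x] dd_pos by (simp add: zero_less_mult_iff)
qed

lemma prod_cmp: "x \<in> Udom \<Longrightarrow> (\<Prod>j\<in>UNIV. cmp j x) =
   complex_of_real (x$p ^ CARD('m)) * exp (\<i> * complex_of_real (\<theta> (x$q))) * complex_of_real (sq (x$q))"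
proof -
  assume x: "x \<in> Udom"
  have X: "of_int (a j) * u (x$q) + 1 > 0" for j using Xw_pos[OF x, of j] by (simp add: Xw_def)
  have e: "(\<Prod>j\<in>UNIV. exp (\<i> * complex_of_real (alf x j))) = exp (\<i> * complex_of_real (\<theta> (x$q)))"
    unfolding exp_sum[OF finite, symmetric] alf_sum[symmetric] of_real_sum sum_distrib_left ..
  have s: "(\<Prod>j\<in>UNIV. complex_of_real (sqrt (of_int (a j) * u (x$q) + 1))) = complex_of_real (sq (x$q))"
    unfolding of_real_prod[symmetric] sq_def Qpoly_def sqrt_prod[OF finite] ..
  show ?thesis unfolding cmp_def prod.distrib e s by simp
qed

lemma det_Mx: "x \<in> Udom \<Longrightarrow> det (Mx x) = \<i> ^ card K * complex_of_real (P x)"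
proof -
  assume x: "x \<in> Udom"
  have r: "x$p > 0" using x by (simp add: Udom_def)
  have Q: "Qpoly a (u (x$q)) > 0" by (rule Qpoly_pos) (use Xw_pos[OF x] in \<open>simp add: Xw_def\<close>)
  let ?t = "\<theta> (x$q)"
  have RI: "complex_of_real (Re0 x) + \<i> * complex_of_real (Im0 x) =
     complex_of_real (real CARD('m) / dd * sq (x$q) * S2 (x$q)) * (complex_of_real (cos ?t) - \<i> * complex_of_real (sin ?t))"
    unfolding Re0_eq[OF x] Im0_eq du0_def dps0_def by (simp add: complex_eq_iff)
  have pK: "(\<Prod>j\<in>K. \<i> * cmp j x) = \<i> ^ card K * (\<Prod>j\<in>K. cmp j x)"
    by (simp add: prod.distrib)
  have pU: "(\<Prod>j\<in>UNIV. cmp j x) = cmp p x * cmp q x * (\<Prod>j\<in>K. cmp j x)" by (rule prod_split3[OF pq])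
  have E: "exp (\<i> * complex_of_real ?t) * (complex_of_real (cos ?t) - \<i> * complex_of_real (sin ?t)) = 1"
  proof -
    have "exp (\<i> * complex_of_real ?t) = complex_of_real (cos ?t) + \<i> * complex_of_real (sin ?t)"
      by (simp add: cis_conv_exp[symmetric] cis.ctr complex_eq_iff)
    moreover have "complex_of_real (cos ?t * cos ?t) + complex_of_real (sin ?t * sin ?t) = 1"
      unfolding of_real_add[symmetric] by (simp add: sin_cos_squared_add3)
    ultimately show ?thesis by (simp add: algebra_simps flip: of_real_mult)
  qed
  have "det (Mx x) = \<i> ^ card K * ((\<Prod>j\<in>UNIV. cmp j x) * complex_of_real (1 / x$p) *
     (complex_of_real (Re0 x) + \<i> * complex_of_real (Im0 x)))"
    unfolding det_Mx1 pK pU by (simp add: algebra_simps)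
  also have "\<dots> = \<i> ^ card K * (complex_of_real (x$p ^ CARD('m) * sq (x$q) * (1 / x$p) * (real CARD('m) / dd * sq (x$q) * S2 (x$q)))
     * (exp (\<i> * complex_of_real ?t) * (complex_of_real (cos ?t) - \<i> * complex_of_real (sin ?t))))"
    unfolding prod_cmp[OF x] RI by (simp only: of_real_mult mult_ac)
  also have "\<dots> = \<i> ^ card K * complex_of_real (P x)"
    unfolding E P_def using Q by (simp add: sq_def algebra_simps)
  finally show ?thesis .
qed

end

(* ---- Geo9 ---- *)
context geo
begin

lemma main: "special_lagrangian (\<i> ^ (CARD('m) - 2)) Nset"
  unfolding special_lagrangian_def
proof (intro exI[of _ "\<lambda>_. Udom"] exI[of _ "\<lambda>_. chart"] exI[of _ "{0::nat}"] conjI ballI)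
  show "Nset = (\<Union>i\<in>{0::nat}. chart ` Udom)" using image_chart by simp
  fix i :: nat
  show "open Udom" by (rule open_Udom)
  show "smooth_on Udom chart" by (rule smooth_chart)
  fix x assume x: "x \<in> Udom"
  have hd: "(chart has_derivative Dchart x) (at x)" by (rule hd_chart[OF x])
  have fd: "frechet_derivative chart (at x) = Dchart x" using frechet_derivative_at[OF hd] by simp
  show "chart differentiable at x" using hd by (auto simp: differentiable_def)
  have Om: "Omega_on (Dchart x) = \<i> ^ card K * complex_of_real (P x)"
    unfolding Omega_on_def det_Mx[OF x, symmetric] Mx_def ..
  have G: "det (\<chi> j k. Dchart x (axis j 1) \<bullet> Dchart x (axis k 1) :: real^'m^'m) = (cmod (Omega_on (Dchart x)))\<^sup>2"
    unfolding Omega_on_def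
    by (rule gram_det[of "\<lambda>k. Dchart x (axis k 1)"]) (rule lagrangian[OF x])
  have cm: "cmod (Omega_on (Dchart x)) = P x"
    unfolding Om using P_pos[OF x] by (simp add: norm_mult norm_power)
  have vol: "vol_on (Dchart x) = P x"
    unfolding vol_on_def G cm using P_pos[OF x] by simp
  show "inj (frechet_derivative chart (at x))"
    unfolding fd
    apply (rule inj_from_gram)
     apply (rule has_derivative_linear[OF hd])
    unfolding G cm using P_pos[OF x] by simp
  have ii: "cnj (\<i> ^ n) * \<i> ^ n = 1" for n :: nat
  proof -
    have "cnj (\<i> ^ n) * \<i> ^ n = (cnj \<i> * \<i>) ^ n" by (simp only: power_mult_distrib complex_cnj_power)
    also have "cnj \<i> * \<i> = 1" by simp
    finally show ?thesis by simp
  qed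
  have "cnj (\<i> ^ (CARD('m) - 2)) * Omega_on (Dchart x) = complex_of_real (P x)"
    unfolding Om card_K mult.assoc[symmetric] ii by simp
  then show "Re (cnj (\<i> ^ (CARD('m) - 2)) * Omega_on (frechet_derivative chart (at x))) = vol_on (frechet_derivative chart (at x))"
    unfolding fd vol by simp
qed

end

theorem theorem7p2:
  fixes a :: "'m::{finite,linorder} \<Rightarrow> int"
    and \<epsilon> :: real and u \<theta> \<psi> :: "real \<Rightarrow> real"
  assumes m3: "CARD('m::{finite,linorder}) \<ge> 3"
    and a_mono: "mono a"
    and a_nz: "\<exists>j. a j \<noteq> 0"
    and a_gcd: "Gcd (range a) = 1"
    and a_sum: "(\<Sum>j\<in>UNIV. a j) = 0"
    and eps: "\<epsilon> > 0"
    and pos: "\<And>j t. t \<in> {-\<epsilon><..<\<epsilon>} \<Longrightarrow> of_int (a j) * u t + 1 > 0"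
    and du: "\<And>t. t \<in> {-\<epsilon><..<\<epsilon>} \<Longrightarrow>
              (u has_real_derivative (2 * sqrt (Qpoly a (u t)) * cos (\<theta> t))) (at t)"
    and dtheta: "\<And>t. t \<in> {-\<epsilon><..<\<epsilon>} \<Longrightarrow>
              (\<theta> has_real_derivative
                 (- sqrt (Qpoly a (u t)) * sin (\<theta> t) *
                    (\<Sum>j\<in>UNIV. of_int (a j) / (of_int (a j) * u t + 1)))) (at t)"
    and dpsi: "\<And>t. t \<in> {-\<epsilon><..<\<epsilon>} \<Longrightarrow>
              (\<psi> has_real_derivative
                 (- sqrt (Qpoly a (u t)) * sin (\<theta> t) *
                    (\<Sum>j\<in>UNIV. (of_int (a j))\<^sup>2 / (of_int (a j) * u t + 1)))) (at t)"
  shows "special_lagrangian (\<i> ^ (CARD('m::{finite,linorder}) - 2))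
           {z :: complex^('m::{finite,linorder}). \<exists>r t (\<alpha> :: 'm \<Rightarrow> real).
              r > 0 \<and> t \<in> {-\<epsilon><..<\<epsilon>} \<and>
              (\<Sum>j\<in>UNIV. \<alpha> j) = \<theta> t \<and>
              (\<Sum>j\<in>UNIV. of_int (a j) * \<alpha> j) = \<psi> t \<and>
              z = (\<chi> j. complex_of_real r * exp (\<i> * complex_of_real (\<alpha> j)) *
                         complex_of_real (sqrt (of_int (a j) * u t + 1)))}"
  proof -
  have ex_neg: "\<exists>j. a j < 0"
  proof (rule ccontr)
    assume "\<not> (\<exists>j. a j < 0)"
    then have nn: "\<And>j. a j \<ge> 0" by (simp add: not_less)
    then have "\<forall>j\<in>UNIV. a j = 0" using a_sum sum_nonneg_eq_0_iff[of UNIV a] by simp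
    then show False using a_nz by simp
  qed
  have ex_pos: "\<exists>j. a j > 0"
  proof (rule ccontr)
    assume "\<not> (\<exists>j. a j > 0)"
    then have nn: "\<And>j. - a j \<ge> 0" by (simp add: not_less)
    have "(\<Sum>j\<in>UNIV. - a j) = 0" using a_sum by (simp add: sum_negf)
    then have "\<forall>j\<in>UNIV. - a j = 0" using nn sum_nonneg_eq_0_iff[of UNIV "\<lambda>j. - a j"] by simp
    then show False using a_nz by simp
  qed
  obtain p where p: "a p < 0" using ex_neg by blast
  obtain q where q: "a q > 0" using ex_pos by blast
  interpret geo a u \<theta> \<psi> \<epsilon> p q
    by (unfold_locales) (use p q a_sum pos du dtheta dpsi in auto)
  show ?thesis using main unfolding Nset_def .
qed

end
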